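(* Let $L\subset S^3$ be an oriented link and $\widehat{\mathcal{B}}_L$ its topological biquandle. For all $a,b,c\in\widehat{\mathcal{B}}_L$: (1) every up-type operation commutes with every down-type operation: $(a\uparrow b)\downarrow c=(a\downarrow c)\uparrow b$, $(a\Uparrow b)\downarrow c=(a\downarrow c)\Uparrow b$, $(a\uparrow b)\Downarrow c=(a\Downarrow c)\uparrow b$, $(a\Uparrow b)\Downarrow c=(a\Downarrow c)\Uparrow b$; (2) $(a\uparrow b)\Uparrow b=(a\Uparrow b)\uparrow b=(a\downarrow b)\Downarrow b=(a\Downarrow b)\downarrow b=a$; (3) $a\uparrow(b\downarrow c)=a\uparrow(b\Downarrow c)=a\uparrow b$, $a\Uparrow(b\downarrow c)=a\Uparrow(b\Downarrow c)=a\Uparrow b$, $a\downarrow(b\uparrow c)=a\downarrow(b\Uparrow c)=a\downarrow b$, and $a\Downarrow(b\uparrow c)=a\Downarrow(b\Uparrow c)=a\Downarrow b$.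
   Context: An oriented link $L$ is an oriented subspace of $S^3$ homeomorphic to a finite disjoint union of circles. Let $N_L$ be a regular neighborhood of $L$ and $E_L$ the closure of $S^3\setminus N_L$; the orientation of $L$ induces an orientation of its normal bundle by the right-hand rule. Choose a 3-ball $B^3\subset S^3$ with $N_L\subset B^3$ and antipodal points $z_0,z_1\in\partial B^3$. For a path $a$, $\overline{a}(t)=a(1-t)$; $a\cdot b$ is concatenation. Let $\mathcal{B}_L$ be the set of pairs $(a_0,a_1)$ with $a_i\colon[0,1]\to E_L$ a path from a point of $\partial N_L$ to $z_i$ and $a_0(0)=a_1(0)$. Set $(a_0,a_1)\sim(b_0,b_1)$ if there is a homotopy $H_t\colon[0,1]\to E_L$ with $H_0=\overline{a_0}\cdot a_1$, $H_1=\overline{b_0}\cdot b_1$, $H_t(0)=z_0$, $H_t(1)=z_1$, $H_t(\tfrac12)\in\partial N_L$ for all $t$. The topological biquandle is $\widehat{\mathcal{B}}_L=\mathcal{B}_L/\!\sim$ (classes $[a_0,a_1]$) with operations $[a_0,a_1]\uparrow[b_0,b_1]=[a_0\cdot\overline{b_0}\cdot m_{b_0(0)}\cdot b_0,\ a_1]$ and $[a_0,a_1]\downarrow[b_0,b_1]=[a_0,\ a_1\cdot\overline{b_1}\cdot m_{b_1(0)}\cdot b_1]$, where for $p\in\partial N_L$, $m_p$ is the loop in $\partial N_L$ at $p$ going once positively around the meridian of the corresponding component of $L$; it is a biquandle. In any biquandle, with $S(x,y)=(y\downarrow x,\ x\uparrow y)$ (a bijection), the up-bar and down-bar operations are defined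 by $S^{-1}(a,b)=(b\Uparrow a,\ a\Downarrow b)$. *)

theory Defs
  imports "HOL-Analysis.Analysis"
begin

definition S3 :: "(real^4) set" where
  "S3 = sphere 0 1"

text \<open>A tame oriented link with k components is encoded by a (closed) tubular
  neighbourhood parametrisation  phi : (k copies of S^1 x D^2) -> S^3, injective and continuous
  (hence a homeomorphism onto its image, the regular neighbourhood N_L).  Component i of L is
  u |-> phi (i,u,0), oriented by increasing argument of u.\<close>
definition tor_dom :: "nat \<Rightarrow> (nat \<times> complex \<times> complex) set" where
  "tor_dom k = {(i,u,w). i < k \<and> norm u = 1 \<and> norm w \<le> 1}"

definition tor_bdry :: "nat \<Rightarrow> (nat \<times> complex \<times> complex) set" where
  "tor_bdry k = {(i,u,w). i < k \<and> norm u = 1 \<and> norm w = 1}"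

definition link_of :: "(nat \<times> complex \<times> complex \<Rightarrow> real^4) \<Rightarrow> nat \<Rightarrow> (real^4) set" where
  "link_of \<phi> k = \<phi> ` {(i,u,w). i < k \<and> norm u = 1 \<and> w = 0}"

definition nbhd :: "(nat \<times> complex \<times> complex \<Rightarrow> real^4) \<Rightarrow> nat \<Rightarrow> (real^4) set" where
  "nbhd \<phi> k = \<phi> ` tor_dom k"

definition bdry :: "(nat \<times> complex \<times> complex \<Rightarrow> real^4) \<Rightarrow> nat \<Rightarrow> (real^4) set" where
  "bdry \<phi> k = \<phi> ` tor_bdry k"

definition ext :: "(nat \<times> complex \<times> complex \<Rightarrow> real^4) \<Rightarrow> nat \<Rightarrow> (real^4) set" where
  "ext \<phi> k = closure (S3 - nbhd \<phi> k)"

text \<open>Meridian loop at a point p of the boundary: it runs once around the D^2 factor.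
  The sign \<epsilon> (1 or -1) selects the direction; the positive (right-hand rule) direction is one
  of these two.\<close>
definition meridian ::
  "(nat \<times> complex \<times> complex \<Rightarrow> real^4) \<Rightarrow> nat \<Rightarrow> real \<Rightarrow> real^4 \<Rightarrow> (real \<Rightarrow> real^4)" where
  "meridian \<phi> k \<epsilon> p =
     (let (i,u,w) = inv_into (tor_bdry k) \<phi> p
      in (\<lambda>t. \<phi> (i, u, w * exp (complex_of_real (2 * pi * \<epsilon> * t) * \<i>))))"

definition arcs ::
  "(nat \<times> complex \<times> complex \<Rightarrow> real^4) \<Rightarrow> nat \<Rightarrow> real^4 \<Rightarrow> real^4
     \<Rightarrow> ((real \<Rightarrow> real^4) \<times> (real \<Rightarrow> real^4)) set" where
  "arcs \<phi> k z0 z1 = {(a0, a1).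
      path a0 \<and> path a1 \<and> path_image a0 \<subseteq> ext \<phi> k \<and> path_image a1 \<subseteq> ext \<phi> k \<and>
      pathstart a0 \<in> bdry \<phi> k \<and> pathstart a1 = pathstart a0 \<and>
      pathfinish a0 = z0 \<and> pathfinish a1 = z1}"

definition arc_rel ::
  "(nat \<times> complex \<times> complex \<Rightarrow> real^4) \<Rightarrow> nat \<Rightarrow> real^4 \<Rightarrow> real^4
     \<Rightarrow> (((real \<Rightarrow> real^4) \<times> (real \<Rightarrow> real^4)) \<times> ((real \<Rightarrow> real^4) \<times> (real \<Rightarrow> real^4))) set" where
  "arc_rel \<phi> k z0 z1 = {((a0, a1), (b0, b1)).
      (a0, a1) \<in> arcs \<phi> k z0 z1 \<and> (b0, b1) \<in> arcs \<phi> k z0 z1 \<and>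
      homotopic_with_canon (\<lambda>r. r 0 = z0 \<and> r 1 = z1 \<and> r (1/2) \<in> bdry \<phi> k)
        {0..1} (ext \<phi> k) (reversepath a0 +++ a1) (reversepath b0 +++ b1)}"

definition biq ::
  "(nat \<times> complex \<times> complex \<Rightarrow> real^4) \<Rightarrow> nat \<Rightarrow> real^4 \<Rightarrow> real^4
     \<Rightarrow> ((real \<Rightarrow> real^4) \<times> (real \<Rightarrow> real^4)) set set" where
  "biq \<phi> k z0 z1 = arcs \<phi> k z0 z1 // arc_rel \<phi> k z0 z1"

definition up_rep where
  "up_rep \<phi> k \<epsilon> a b =
     (fst a +++ reversepath (fst b) +++ meridian \<phi> k \<epsilon> (pathstart (fst b)) +++ fst b, snd a)"

definition down_rep where
  "down_rep \<phi> k \<epsilon> a b =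
     (fst a, snd a +++ reversepath (snd b) +++ meridian \<phi> k \<epsilon> (pathstart (snd b)) +++ snd b)"

definition bq_up where
  "bq_up \<phi> k \<epsilon> z0 z1 X Y =
     arc_rel \<phi> k z0 z1 `` {up_rep \<phi> k \<epsilon> (SOME x. x \<in> X) (SOME y. y \<in> Y)}"

definition bq_down where
  "bq_down \<phi> k \<epsilon> z0 z1 X Y =
     arc_rel \<phi> k z0 z1 `` {down_rep \<phi> k \<epsilon> (SOME x. x \<in> X) (SOME y. y \<in> Y)}"

definition bq_S where
  "bq_S \<phi> k \<epsilon> z0 z1 p = (bq_down \<phi> k \<epsilon> z0 z1 (snd p) (fst p), bq_up \<phi> k \<epsilon> z0 z1 (fst p) (snd p))"

definition bq_Sinv where
  "bq_Sinv \<phi> k \<epsilon> z0 z1 q =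
     (THE p. p \<in> biq \<phi> k z0 z1 \<times> biq \<phi> k z0 z1 \<and> bq_S \<phi> k \<epsilon> z0 z1 p = q)"

definition bq_Up where
  "bq_Up \<phi> k \<epsilon> z0 z1 b a = fst (bq_Sinv \<phi> k \<epsilon> z0 z1 (a, b))"

definition bq_Down where
  "bq_Down \<phi> k \<epsilon> z0 z1 a b = snd (bq_Sinv \<phi> k \<epsilon> z0 z1 (a, b))"

end

theory Submission
  imports Defs
begin


lemma hw_char:
  "homotopic_with_canon (\<lambda>r. r 0 = z0 \<and> r 1 = z1 \<and> r (1/2::real) \<in> B) {0..1} S (p::real\<Rightarrow>_) q \<longleftrightarrow>
   (\<exists>h. continuous_on ({0..1}\<times>{0..1}) h \<and> h \<in> ({0..1}\<times>{0..1}) \<rightarrow> S \<and>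
        (\<forall>x\<in>{0..1}. h(0,x) = p x) \<and> (\<forall>x\<in>{0..1}. h(1,x) = q x) \<and>
        (\<forall>t\<in>{0..1::real}. h(t,0) = z0 \<and> h(t,1) = z1 \<and> h(t,1/2) \<in> B))"
  by (auto simp: homotopic_with)

lemma hp_char:
  "homotopic_paths S p q \<longleftrightarrow>
   (\<exists>h. continuous_on ({0..1}\<times>{0..1}) h \<and> h \<in> ({0..1}\<times>{0..1}) \<rightarrow> S \<and>
        (\<forall>x\<in>{0..1}. h(0,x) = p x) \<and> (\<forall>x\<in>{0..1}. h(1,x) = q x) \<and>
        (\<forall>t\<in>{0..1::real}. h(t,0) = p 0 \<and> h(t,1) = p 1))"
  by (auto simp: homotopic_paths pathstart_def pathfinish_def)




abbreviation "I2 \<equiv> ({0..1::real} \<times> {0..1::real})"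

definition fam where
 "fam S B z0 z1 (L::real\<times>real\<Rightarrow>'a::topological_space) Rf x0 x1 y0 y1 \<longleftrightarrow>
   continuous_on I2 L \<and> continuous_on I2 Rf \<and> L \<in> I2 \<rightarrow> S \<and> Rf \<in> I2 \<rightarrow> S \<and>
   (\<forall>t\<in>{0..1}. L(0,t) = x0 t \<and> L(1,t) = y0 t \<and> Rf(0,t) = x1 t \<and> Rf(1,t) = y1 t) \<and>
   (\<forall>s\<in>{0..1}. L(s,0) = Rf(s,0) \<and> L(s,0) \<in> B \<and> L(s,1) = z0 \<and> Rf(s,1) = z1)"

lemma cont_slice:
  assumes "continuous_on I2 L" "s \<in> {0..1}" "\<forall>t\<in>{0..1}. L(s,t) = x t"
  shows "continuous_on {0..1} x"
proof -
  have "continuous_on {0..1} (L \<circ> Pair s)" using continuous_on_o_Pair[OF assms(1) assms(2)] .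
  then show ?thesis by (rule continuous_on_eq) (use assms(3) in auto)
qed

lemma cont_rev_fam:
  assumes "continuous_on I2 L"
  shows "continuous_on I2 (\<lambda>y. reversepath (\<lambda>t. L(fst y, t)) (snd y))"
  unfolding reversepath_def
  by (rule continuous_on_compose2[OF assms, of _ "\<lambda>y. (fst y, 1 - snd y)", simplified])
     (auto intro!: continuous_intros)

lemma fam_imp_rel:
  assumes "fam (ext \<phi> k) (bdry \<phi> k) z0 z1 L Rf x0 x1 y0 y1"
  shows "((x0,x1),(y0,y1)) \<in> arc_rel \<phi> k z0 z1"
proof -
  note F = assms[unfolded fam_def]
  have cL: "continuous_on I2 L" and cR: "continuous_on I2 Rf" and iL: "L \<in> I2 \<rightarrow> ext \<phi> k"
    and iR: "Rf \<in> I2 \<rightarrow> ext \<phi> k" using F by auto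
  have e: "\<forall>t\<in>{0..1}. L(0,t) = x0 t" "\<forall>t\<in>{0..1}. L(1,t) = y0 t"
          "\<forall>t\<in>{0..1}. Rf(0,t) = x1 t" "\<forall>t\<in>{0..1}. Rf(1,t) = y1 t" using F by auto
  have en: "\<forall>s\<in>{0..1}. L(s,0) = Rf(s,0) \<and> L(s,0) \<in> bdry \<phi> k \<and> L(s,1) = z0 \<and> Rf(s,1) = z1"
    using F by auto
  have p: "path x0" "path y0" "path x1" "path y1" unfolding path_def
    using cont_slice[OF cL _ e(1)] cont_slice[OF cL _ e(2)] cont_slice[OF cR _ e(3)]
      cont_slice[OF cR _ e(4)] by auto
  have im: "path_image x0 \<subseteq> ext \<phi> k" "path_image y0 \<subseteq> ext \<phi> k"
     "path_image x1 \<subseteq> ext \<phi> k" "path_image y1 \<subseteq> ext \<phi> k"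
    unfolding path_image_def using iL iR e by (auto simp: Pi_iff) (metis atLeastAtMost_iff zero_le_one order_refl)+
  have en0: "L(0,0) = Rf(0,0) \<and> L(0,0) \<in> bdry \<phi> k \<and> L(0,1) = z0 \<and> Rf(0,1) = z1"
    and en1: "L(1,0) = Rf(1,0) \<and> L(1,0) \<in> bdry \<phi> k \<and> L(1,1) = z0 \<and> Rf(1,1) = z1"
    using en by (metis atLeastAtMost_iff order_refl zero_le_one)+
  have pts: "x0 0 = L(0,0)" "x0 1 = L(0,1)" "x1 0 = Rf(0,0)" "x1 1 = Rf(0,1)"
     "y0 0 = L(1,0)" "y0 1 = L(1,1)" "y1 0 = Rf(1,0)" "y1 1 = Rf(1,1)" using e by auto
  have arcs: "(x0,x1) \<in> arcs \<phi> k z0 z1" "(y0,y1) \<in> arcs \<phi> k z0 z1"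
    unfolding arcs_def using p im en0 en1 pts by (auto simp: pathstart_def pathfinish_def)
  have "homotopic_with_canon (\<lambda>r. r 0 = z0 \<and> r 1 = z1 \<and> r (1/2::real) \<in> bdry \<phi> k) {0..1} (ext \<phi> k)
          (reversepath x0 +++ x1) (reversepath y0 +++ y1)"
    unfolding hw_char
  proof (intro exI conjI)
    let ?h = "\<lambda>y. ((\<lambda>s. reversepath (\<lambda>t. L(s,t))) (fst y) +++ (\<lambda>s t. Rf(s,t)) (fst y)) (snd y)"
    show "continuous_on I2 ?h"
      by (rule continuous_on_homotopic_join_lemma)
         (use cont_rev_fam[OF cL] cR en in \<open>auto simp: pathstart_def pathfinish_def reversepath_def\<close>)
    show "?h \<in> I2 \<rightarrow> ext \<phi> k"
      using iL iR by (auto simp: joinpaths_def reversepath_def Pi_iff)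
    show "\<forall>x\<in>{0..1}. ?h (0, x) = (reversepath x0 +++ x1) x"
      using e by (auto simp: joinpaths_def reversepath_def)
    show "\<forall>x\<in>{0..1}. ?h (1, x) = (reversepath y0 +++ y1) x"
      using e by (auto simp: joinpaths_def reversepath_def)
    show "\<forall>t\<in>{0..1}. ?h (t, 0) = z0 \<and> ?h (t, 1) = z1 \<and> ?h (t, 1/2) \<in> bdry \<phi> k"
    proof
      fix t :: real assume t: "t \<in> {0..1}"
      then have "L(t,0) = Rf(t,0)" "L(t,0) \<in> bdry \<phi> k" "L(t,1) = z0" "Rf(t,1) = z1" using bspec[OF en t] by auto
      then show "?h (t, 0) = z0 \<and> ?h (t, 1) = z1 \<and> ?h (t, 1/2) \<in> bdry \<phi> k"
        by (simp add: joinpaths_def reversepath_def)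
    qed
  qed
  then show ?thesis using arcs unfolding arc_rel_def by auto
qed




lemma rel_imp_fam:
  assumes "((x0,x1),(y0,y1)) \<in> arc_rel \<phi> k z0 z1"
  shows "\<exists>L Rf. fam (ext \<phi> k) (bdry \<phi> k) z0 z1 L Rf x0 x1 y0 y1"
proof -
  have ax: "(x0,x1) \<in> arcs \<phi> k z0 z1" and ay: "(y0,y1) \<in> arcs \<phi> k z0 z1"
   and hom: "homotopic_with_canon (\<lambda>r. r 0 = z0 \<and> r 1 = z1 \<and> r (1/2::real) \<in> bdry \<phi> k) {0..1} (ext \<phi> k)
          (reversepath x0 +++ x1) (reversepath y0 +++ y1)"
    using assms unfolding arc_rel_def by auto
  have sx: "x1 0 = x0 0" and sy: "y1 0 = y0 0" using ax ay unfolding arcs_def by (auto simp: pathstart_def)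
  obtain h where hc: "continuous_on I2 h" and hi: "h \<in> I2 \<rightarrow> ext \<phi> k"
    and h0: "\<forall>x\<in>{0..1}. h(0,x) = (reversepath x0 +++ x1) x"
    and h1: "\<forall>x\<in>{0..1}. h(1,x) = (reversepath y0 +++ y1) x"
    and he: "\<forall>t\<in>{0..1::real}. h(t,0) = z0 \<and> h(t,1) = z1 \<and> h(t,1/2) \<in> bdry \<phi> k"
    using hom unfolding hw_char by blast
  define L where "L = (\<lambda>y. h(fst y, (1 - snd y)/2))"
  define Rf where "Rf = (\<lambda>y. h(fst y, (1 + snd y)/2))"
  have cL: "continuous_on I2 L" unfolding L_def
    by (rule continuous_on_compose2[OF hc, of _ "\<lambda>y. (fst y, (1 - snd y)/2)", simplified])
       (auto intro!: continuous_intros)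
  have cR: "continuous_on I2 Rf" unfolding Rf_def
    by (rule continuous_on_compose2[OF hc, of _ "\<lambda>y. (fst y, (1 + snd y)/2)", simplified])
       (auto intro!: continuous_intros)
  have iL: "L \<in> I2 \<rightarrow> ext \<phi> k" unfolding L_def using hi by (auto simp: Pi_iff)
  have iR: "Rf \<in> I2 \<rightarrow> ext \<phi> k" unfolding Rf_def using hi by (auto simp: Pi_iff)
  have "fam (ext \<phi> k) (bdry \<phi> k) z0 z1 L Rf x0 x1 y0 y1"
    unfolding fam_def
  proof (intro conjI cL cR iL iR ballI)
    fix t :: real assume t: "t \<in> {0..1}"
    have a: "(1 - t)/2 \<in> {0..1}" "(1 + t)/2 \<in> {0..1}" using t by auto
    show "L(0,t) = x0 t" "L(1,t) = y0 t"
      using h0 h1 a t by (auto simp: L_def joinpaths_def reversepath_def diff_divide_distrib)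
    show "Rf(0,t) = x1 t"
    proof (cases "t = 0")
      case True then show ?thesis using h0 sx by (simp add: Rf_def joinpaths_def reversepath_def)
    next
      case False then show ?thesis using h0 a t by (auto simp: Rf_def joinpaths_def reversepath_def add_divide_distrib)
    qed
    show "Rf(1,t) = y1 t"
    proof (cases "t = 0")
      case True then show ?thesis using h1 sy by (simp add: Rf_def joinpaths_def reversepath_def)
    next
      case False then show ?thesis using h1 a t by (auto simp: Rf_def joinpaths_def reversepath_def add_divide_distrib)
    qed
  next
    fix s :: real assume s: "s \<in> {0..1}"
    show "L(s,0) = Rf(s,0)" "L(s,0) \<in> bdry \<phi> k" "L(s,1) = z0" "Rf(s,1) = z1"
      using bspec[OF he s] by (simp_all add: L_def Rf_def)
  qed
  then show ?thesis by blast
qed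

lemma rel_fam: "((x0,x1),(y0,y1)) \<in> arc_rel \<phi> k z0 z1 \<longleftrightarrow>
   (\<exists>L Rf. fam (ext \<phi> k) (bdry \<phi> k) z0 z1 L Rf x0 x1 y0 y1)"
  using rel_imp_fam fam_imp_rel by blast

lemma fam_swap: "fam S B z0 z1 L Rf x0 x1 y0 y1 \<Longrightarrow> fam S B z1 z0 Rf L x1 x0 y1 y0"
  unfolding fam_def by auto

lemma rel_swap: "((x0,x1),(y0,y1)) \<in> arc_rel \<phi> k z0 z1 \<Longrightarrow> ((x1,x0),(y1,y0)) \<in> arc_rel \<phi> k z1 z0"
  using rel_fam fam_swap by metis

lemma arcs_swap: "(x0,x1) \<in> arcs \<phi> k z0 z1 \<longleftrightarrow> (x1,x0) \<in> arcs \<phi> k z1 z0"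
  unfolding arcs_def by auto




locale biqL =
  fixes \<phi> :: "nat \<times> complex \<times> complex \<Rightarrow> real^4" and k :: nat
  assumes bd_ext: "bdry \<phi> k \<subseteq> ext \<phi> k"
    and mc: "\<And>e. e = 1 \<or> e = -1 \<Longrightarrow> continuous_on (bdry \<phi> k \<times> {0..1}) (\<lambda>z. meridian \<phi> k e (fst z) (snd z))"
    and m0: "\<And>e p. e = 1 \<or> e = -1 \<Longrightarrow> p \<in> bdry \<phi> k \<Longrightarrow> meridian \<phi> k e p 0 = p"
    and m1: "\<And>e p. e = 1 \<or> e = -1 \<Longrightarrow> p \<in> bdry \<phi> k \<Longrightarrow> meridian \<phi> k e p 1 = p"
    and mim: "\<And>e p t. e = 1 \<or> e = -1 \<Longrightarrow> p \<in> bdry \<phi> k \<Longrightarrow> t \<in> {0..1} \<Longrightarrow> meridian \<phi> k e p t \<in> bdry \<phi> k"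
    and mrev: "\<And>e p. e = 1 \<or> e = -1 \<Longrightarrow> meridian \<phi> k (-e) p = reversepath (meridian \<phi> k e p)"
begin

abbreviation "E \<equiv> ext \<phi> k"
abbreviation "Bd \<equiv> bdry \<phi> k"

definition beta where
  "beta e y = reversepath (fst y) +++ meridian \<phi> k e (pathstart (fst y)) +++ fst y"

lemma up_rep_beta: "up_rep \<phi> k e x y = (fst x +++ beta e y, snd x)"
  by (simp add: up_rep_def beta_def)

lemma mer_path:
  assumes e: "e = 1 \<or> e = -1" and p: "p \<in> Bd"
  shows "path (meridian \<phi> k e p)" "path_image (meridian \<phi> k e p) \<subseteq> E"
    "pathstart (meridian \<phi> k e p) = p" "pathfinish (meridian \<phi> k e p) = p"
proof -
  show "path (meridian \<phi> k e p)" unfolding path_def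
    by (rule continuous_on_compose2[OF mc[OF e], of _ "\<lambda>t. (p,t)", simplified])
       (use p in \<open>auto intro!: continuous_intros\<close>)
  show "path_image (meridian \<phi> k e p) \<subseteq> E"
    using mim[OF e p] bd_ext by (auto simp: path_image_def)
  show "pathstart (meridian \<phi> k e p) = p" "pathfinish (meridian \<phi> k e p) = p"
    using m0[OF e p] m1[OF e p] by (auto simp: pathstart_def pathfinish_def)
qed

lemma arcsD:
  assumes "(a0,a1) \<in> arcs \<phi> k z0 z1"
  shows "path a0" "path a1" "path_image a0 \<subseteq> E" "path_image a1 \<subseteq> E" "pathstart a0 \<in> Bd"
     "pathstart a1 = pathstart a0" "pathfinish a0 = z0" "pathfinish a1 = z1"
  using assms unfolding arcs_def by auto

lemma beta_props:
  assumes e: "e = 1 \<or> e = -1" and y: "y \<in> arcs \<phi> k z0 z1"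
  shows "path (beta e y)" "path_image (beta e y) \<subseteq> E" "pathstart (beta e y) = z0" "pathfinish (beta e y) = z0"
proof -
  obtain y0 y1 where yy: "y = (y0,y1)" by force
  note A = arcsD[OF y[unfolded yy]]
  note M = mer_path[OF e A(5)]
  show "path (beta e y)" "path_image (beta e y) \<subseteq> E" "pathstart (beta e y) = z0" "pathfinish (beta e y) = z0"
    unfolding beta_def yy fst_conv using A M
    by (auto intro!: path_join_imp simp: path_image_join)
qed

lemma rel_arcs: "(x,y) \<in> arc_rel \<phi> k z0 z1 \<Longrightarrow> x \<in> arcs \<phi> k z0 z1 \<and> y \<in> arcs \<phi> k z0 z1"
  unfolding arc_rel_def by auto

lemma rel_refl:
  assumes "x \<in> arcs \<phi> k z0 z1" shows "(x,x) \<in> arc_rel \<phi> k z0 z1"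
proof -
  obtain a0 a1 where xx: "x = (a0,a1)" by force
  note A = arcsD[OF assms[unfolded xx]]
  have "path (reversepath a0 +++ a1)" using A by (auto intro!: path_join_imp)
  moreover have "path_image (reversepath a0 +++ a1) \<subseteq> E" using A
    by (metis path_image_reversepath pathfinish_reversepath subset_path_image_join)
  moreover have "(reversepath a0 +++ a1) 0 = z0 \<and> (reversepath a0 +++ a1) 1 = z1 \<and>
      (reversepath a0 +++ a1) (1/2::real) \<in> bdry \<phi> k"
    using A by (auto simp: joinpaths_def reversepath_def pathstart_def pathfinish_def)
  ultimately have "homotopic_with_canon (\<lambda>r. r 0 = z0 \<and> r 1 = z1 \<and> r (1/2::real) \<in> bdry \<phi> k) {0..1} E
          (reversepath a0 +++ a1) (reversepath a0 +++ a1)"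
    by (simp add: homotopic_with_refl path_def path_image_def continuous_map_subtopology_eu image_subset_iff_funcset)
  then show ?thesis using assms unfolding xx arc_rel_def by auto
qed

lemma equivR: "equiv (arcs \<phi> k z0 z1) (arc_rel \<phi> k z0 z1)"
proof (rule equivI)
  show "arc_rel \<phi> k z0 z1 \<subseteq> arcs \<phi> k z0 z1 \<times> arcs \<phi> k z0 z1"
  proof (rule subrelI)
    fix x y assume "(x,y) \<in> arc_rel \<phi> k z0 z1" then show "(x,y) \<in> arcs \<phi> k z0 z1 \<times> arcs \<phi> k z0 z1"
      using rel_arcs by blast
  qed
  show "refl_on (arcs \<phi> k z0 z1) (arc_rel \<phi> k z0 z1)"
    unfolding refl_on_def using rel_refl by blast
  show "sym (arc_rel \<phi> k z0 z1)"
    unfolding sym_def arc_rel_def by (auto intro: homotopic_with_symD)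
  show "trans (arc_rel \<phi> k z0 z1)"
    unfolding trans_def arc_rel_def by (auto intro: homotopic_with_trans)
qed

end



context biqL begin

lemma famD:
  assumes "fam S B z0 z1 L Rf x0 x1 y0 y1"
  shows "continuous_on I2 L" "continuous_on I2 Rf" "L \<in> I2 \<rightarrow> S" "Rf \<in> I2 \<rightarrow> S"
    "\<And>t. t\<in>{0..1} \<Longrightarrow> L(0,t) = x0 t" "\<And>t. t\<in>{0..1} \<Longrightarrow> L(1,t) = y0 t"
    "\<And>t. t\<in>{0..1} \<Longrightarrow> Rf(0,t) = x1 t" "\<And>t. t\<in>{0..1} \<Longrightarrow> Rf(1,t) = y1 t"
    "\<And>s. s\<in>{0..1} \<Longrightarrow> L(s,0) = Rf(s,0)" "\<And>s. s\<in>{0..1} \<Longrightarrow> L(s,0) \<in> B"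
    "\<And>s. s\<in>{0..1} \<Longrightarrow> L(s,1) = z0" "\<And>s. s\<in>{0..1} \<Longrightarrow> Rf(s,1) = z1"
  using assms unfolding fam_def by blast+

lemma wd1:
  assumes r: "((x0,x1),(x0',x1')) \<in> arc_rel \<phi> k z0 z1" and b: "path \<beta>" "path_image \<beta> \<subseteq> E"
    "pathstart \<beta> = z0" "pathfinish \<beta> = z0"
  shows "((x0 +++ \<beta>, x1), (x0' +++ \<beta>, x1')) \<in> arc_rel \<phi> k z0 z1"
proof -
  obtain L Rf where F: "fam E Bd z0 z1 L Rf x0 x1 x0' x1'" using r rel_fam by blast
  note D = famD[OF F]
  define L' where "L' = (\<lambda>y. ((\<lambda>s t. L(s,t)) (fst y) +++ (\<lambda>s. \<beta>) (fst y)) (snd y))"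
  have cL': "continuous_on I2 L'" unfolding L'_def
  proof (rule continuous_on_homotopic_join_lemma)
    show "continuous_on I2 (\<lambda>y. L (fst y, snd y))" using D(1) by simp
    show "continuous_on I2 (\<lambda>y. \<beta> (snd y))"
      by (rule continuous_on_compose2[OF b(1)[unfolded path_def], of _ snd]) (auto intro!: continuous_intros)
    show "\<And>t. t \<in> {0..1} \<Longrightarrow> pathfinish (\<lambda>ta. L (t, ta)) = pathstart \<beta>"
      using D(11) b(3) by (simp add: pathfinish_def)
  qed
  have "fam E Bd z0 z1 L' Rf (x0 +++ \<beta>) x1 (x0' +++ \<beta>) x1'"
    unfolding fam_def
  proof (intro conjI ballI cL' D(2) D(4))
    show "L' \<in> I2 \<rightarrow> E"
    proof
      fix y assume y: "y \<in> I2"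
      obtain s t where st: "y = (s,t)" by force
      show "L' y \<in> E"
      proof (cases "t \<le> 1/2")
        case True then show ?thesis using y D(3) by (auto simp: L'_def st joinpaths_def Pi_iff)
      next
        case False then have "\<beta> (2*t-1) \<in> path_image \<beta>" using y st by (auto simp: path_image_def)
        then show ?thesis using b(2) False by (auto simp: L'_def st joinpaths_def)
      qed
    qed
  next
    fix t :: real assume t: "t \<in> {0..1}"
    show "L'(0,t) = (x0 +++ \<beta>) t" "L'(1,t) = (x0' +++ \<beta>) t"
      using t D(5,6) by (auto simp: L'_def joinpaths_def)
    show "Rf(0,t) = x1 t" "Rf(1,t) = x1' t" using t D(7,8) by auto
  next
    fix s :: real assume s: "s \<in> {0..1}"
    show "L'(s,0) = Rf(s,0)" "L'(s,0) \<in> Bd" "L'(s,1) = z0" "Rf(s,1) = z1"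
      using D(9-12)[OF s] b(4) by (auto simp: L'_def joinpaths_def pathfinish_def)
  qed
  then show ?thesis using fam_imp_rel by blast
qed

lemma left_hp:
  assumes h: "homotopic_paths E p q" and a: "(q,x1) \<in> arcs \<phi> k z0 z1"
  shows "((p,x1),(q,x1)) \<in> arc_rel \<phi> k z0 z1"
proof -
  obtain H where hc: "continuous_on I2 H" and hi: "H \<in> I2 \<rightarrow> E"
    and h0: "\<forall>x\<in>{0..1}. H(0,x) = p x" and h1: "\<forall>x\<in>{0..1}. H(1,x) = q x"
    and he: "\<forall>t\<in>{0..1::real}. H(t,0) = p 0 \<and> H(t,1) = p 1"
    using h unfolding hp_char by blast
  have ps: "p 0 = q 0" "p 1 = q 1"
    using homotopic_paths_imp_pathstart[OF h] homotopic_paths_imp_pathfinish[OF h]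
    by (auto simp: pathstart_def pathfinish_def)
  note A = arcsD[OF a]
  have "fam E Bd z0 z1 H (\<lambda>y. x1 (snd y)) p x1 q x1"
    unfolding fam_def
  proof (intro conjI ballI hc hi)
    show "continuous_on I2 (\<lambda>y. x1 (snd y))"
      by (rule continuous_on_compose2[OF A(2)[unfolded path_def], of _ snd]) (auto intro!: continuous_intros)
    show "(\<lambda>y. x1 (snd y)) \<in> I2 \<rightarrow> E" using A(4) by (auto simp: path_image_def)
  next
    fix t :: real assume t: "t \<in> {0..1}"
    show "H(0,t) = p t" "H(1,t) = q t" using t h0 h1 by auto
    show "x1 (snd (0,t)) = x1 t" "x1 (snd (1,t)) = x1 t" by auto
  next
    fix s :: real assume s: "s \<in> {0..1}"
    show "H(s,0) = x1 (snd (s,0))" "H(s,0) \<in> Bd" "H(s,1) = z0" "x1 (snd (s,1)) = z1"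
      using bspec[OF he s] ps A by (auto simp: pathstart_def pathfinish_def)
  qed
  then show ?thesis using fam_imp_rel by blast
qed

lemma right_hp:
  assumes h: "homotopic_paths E p q" and a: "(x0,q) \<in> arcs \<phi> k z0 z1"
  shows "((x0,p),(x0,q)) \<in> arc_rel \<phi> k z0 z1"
proof -
  have "(q,x0) \<in> arcs \<phi> k z1 z0" using a arcs_swap by blast
  then have "((p,x0),(q,x0)) \<in> arc_rel \<phi> k z1 z0" using left_hp h by blast
  then show ?thesis using rel_swap by blast
qed

end



lemma eqon_join: "\<forall>t\<in>{0..1}. f t = g t \<Longrightarrow> \<forall>t\<in>{0..1}. f' t = g' t \<Longrightarrow> t \<in> {0..1::real} \<Longrightarrow> (f +++ f') t = (g +++ g') t"
  by (auto simp: joinpaths_def)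

lemma eqon_join_all: "\<forall>t\<in>{0..1}. f t = g t \<Longrightarrow> \<forall>t\<in>{0..1}. f' t = g' t \<Longrightarrow> \<forall>t\<in>{0..1::real}. (f +++ f') t = (g +++ g') t"
  using eqon_join by blast

lemma eqon_rev: "\<forall>t\<in>{0..1}. f t = g t \<Longrightarrow> \<forall>t\<in>{0..1::real}. reversepath f t = reversepath g t"
  by (auto simp: reversepath_def)

context biqL begin

lemma rel_trans: "(x,y) \<in> arc_rel \<phi> k z0 z1 \<Longrightarrow> (y,w) \<in> arc_rel \<phi> k z0 z1 \<Longrightarrow> (x,w) \<in> arc_rel \<phi> k z0 z1"
  using equivR[of z0 z1] unfolding equiv_def trans_def by blast

lemma rel_sym: "(x,y) \<in> arc_rel \<phi> k z0 z1 \<Longrightarrow> (y,x) \<in> arc_rel \<phi> k z0 z1"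
  using equivR[of z0 z1] unfolding equiv_def sym_def by blast

lemma wd2:
  assumes e: "e = 1 \<or> e = -1" and r: "((y0,y1),(y0',y1')) \<in> arc_rel \<phi> k z0 z1"
  shows "homotopic_paths E (beta e (y0,y1)) (beta e (y0',y1'))"
proof -
  obtain L Rf where F: "fam E Bd z0 z1 L Rf y0 y1 y0' y1'" using r rel_fam by blast
  note D = famD[OF F]
  have ya: "(y0,y1) \<in> arcs \<phi> k z0 z1" "(y0',y1') \<in> arcs \<phi> k z0 z1" using r rel_arcs by auto
  let ?m = "meridian \<phi> k e"
  define H where "H = (\<lambda>z. ((\<lambda>s. reversepath (\<lambda>t. L(s,t))) (fst z) +++
        (\<lambda>s. (?m (L(s,0)) +++ (\<lambda>t. L(s,t)))) (fst z)) (snd z))"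
  have cm: "continuous_on I2 (\<lambda>y. ?m (L(fst y,0)) (snd y))"
  proof -
    have c0: "continuous_on I2 (\<lambda>y. L(fst y, 0))"
      by (rule continuous_on_compose2[OF D(1), of _ "\<lambda>y. (fst y, 0)", simplified]) (auto intro!: continuous_intros)
    show ?thesis
      by (rule continuous_on_compose2[OF mc[OF e], of _ "\<lambda>y. (L(fst y,0), snd y)", simplified])
         (use D(10) in \<open>auto intro!: continuous_intros c0\<close>)
  qed
  have cq: "continuous_on I2 (\<lambda>y. (?m (L(fst y,0)) +++ (\<lambda>t. L(fst y,t))) (snd y))"
  proof (rule continuous_on_homotopic_join_lemma[where p = "\<lambda>s. ?m (L(s,0))" and q = "\<lambda>s t. L(s,t)"])
    show "continuous_on I2 (\<lambda>y. ?m (L(fst y,0)) (snd y))" by (rule cm)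
    show "continuous_on I2 (\<lambda>y. L (fst y, snd y))" using D(1) by simp
    show "\<And>t. t \<in> {0..1} \<Longrightarrow> pathfinish (?m (L(t,0))) = pathstart (\<lambda>ta. L (t, ta))"
      using m1[OF e] D(10) by (simp add: pathfinish_def pathstart_def)
  qed
  have cH: "continuous_on I2 H" unfolding H_def
  proof (rule continuous_on_homotopic_join_lemma)
    show "continuous_on I2 (\<lambda>y. reversepath (\<lambda>t. L (fst y, t)) (snd y))" by (rule cont_rev_fam[OF D(1)])
    show "continuous_on I2 (\<lambda>y. (?m (L(fst y,0)) +++ (\<lambda>t. L(fst y,t))) (snd y))" by (rule cq)
    show "\<And>t. t \<in> {0..1} \<Longrightarrow> pathfinish (reversepath (\<lambda>ta. L (t, ta))) = pathstart (?m (L(t,0)) +++ (\<lambda>ta. L (t, ta)))"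
      using m0[OF e] D(10) by (simp add: pathfinish_def pathstart_def reversepath_def joinpaths_def)
  qed
  have iH: "H \<in> I2 \<rightarrow> E"
  proof
    fix y assume y: "y \<in> I2"
    obtain s t where st: "y = (s,t)" by force
    have s: "s \<in> {0..1}" and t: "t \<in> {0..1}" using y st by auto
    have Ls: "path_image (\<lambda>t. L(s,t)) \<subseteq> E" using D(3) s by (auto simp: path_image_def Pi_iff)
    have "H y \<in> path_image (reversepath (\<lambda>t. L(s,t)) +++ (?m (L(s,0)) +++ (\<lambda>t. L(s,t))))"
      using t by (simp add: H_def st path_image_def)
    also have "\<dots> \<subseteq> E"
      using path_image_join_subset[of "reversepath (\<lambda>t. L(s,t))" "?m (L(s,0)) +++ (\<lambda>t. L(s,t))"]
        path_image_join_subset[of "?m (L(s,0))" "\<lambda>t. L(s,t)"] mer_path(2)[OF e D(10)[OF s]] Ls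
      by auto
    finally show "H y \<in> E" .
  qed
  have b0: "pathstart (beta e (y0,y1)) = z0" "pathfinish (beta e (y0,y1)) = z0"
    using beta_props[OF e ya(1)] by auto
  show ?thesis unfolding hp_char
  proof (intro exI[of _ H] conjI cH iH ballI)
    have eq0: "\<forall>t\<in>{0..1}. L(0,t) = y0 t" "\<forall>t\<in>{0..1}. L(1,t) = y0' t" using D(5,6) by auto
    have ps: "pathstart y0 = L(0,0)" "pathstart y0' = L(1,0)" using D(5,6) by (auto simp: pathstart_def)
    fix x :: real assume x: "x \<in> {0..1}"
    show "H(0,x) = beta e (y0,y1) x"
      unfolding H_def beta_def fst_conv snd_conv ps
      by (rule eqon_join[OF eqon_rev[OF eq0(1)] eqon_join_all[OF _ eq0(1)] x]) simp
    show "H(1,x) = beta e (y0',y1') x"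
      unfolding H_def beta_def fst_conv snd_conv ps
      by (rule eqon_join[OF eqon_rev[OF eq0(2)] eqon_join_all[OF _ eq0(2)] x]) simp
  next
    fix t :: real assume t: "t \<in> {0..1}"
    show "H(t,0) = beta e (y0,y1) 0" "H(t,1) = beta e (y0,y1) 1"
      using b0 D(11)[OF t] by (auto simp: H_def joinpaths_def reversepath_def pathstart_def pathfinish_def)
  qed
qed

lemma up_wd:
  assumes e: "e = 1 \<or> e = -1" and rx: "(x,x') \<in> arc_rel \<phi> k z0 z1" and ry: "(y,y') \<in> arc_rel \<phi> k z0 z1"
  shows "(up_rep \<phi> k e x y, up_rep \<phi> k e x' y') \<in> arc_rel \<phi> k z0 z1"
proof -
  obtain x0 x1 x0' x1' y0 y1 y0' y1' where xx: "x = (x0,x1)" "x' = (x0',x1')" "y = (y0,y1)" "y' = (y0',y1')"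
    by (metis prod.exhaust)
  have ya: "y \<in> arcs \<phi> k z0 z1" "y' \<in> arcs \<phi> k z0 z1" and xa: "x' \<in> arcs \<phi> k z0 z1"
    using ry rx rel_arcs by auto
  note B = beta_props[OF e ya(1)] and B' = beta_props[OF e ya(2)]
  have s1: "((x0 +++ beta e y, x1), (x0' +++ beta e y, x1')) \<in> arc_rel \<phi> k z0 z1"
    using wd1[OF rx[unfolded xx] B] .
  have s2a: "((x0' +++ beta e y', x1'), (x0' +++ beta e y', x1')) \<in> arc_rel \<phi> k z0 z1"
    using wd1[OF rel_refl[OF xa, unfolded xx] B'] .
  note XA = arcsD[OF xa[unfolded xx]]
  have hp: "homotopic_paths E (x0' +++ beta e y) (x0' +++ beta e y')"
    by (rule homotopic_paths_join) (use XA B wd2[OF e ry[unfolded xx]] xx in \<open>auto simp: homotopic_paths_refl\<close>)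
  have s2: "((x0' +++ beta e y, x1'), (x0' +++ beta e y', x1')) \<in> arc_rel \<phi> k z0 z1"
    by (rule left_hp[OF hp]) (use s2a rel_arcs in blast)
  show ?thesis unfolding up_rep_beta xx fst_conv snd_conv
    using rel_trans[OF s1 s2] xx by simp
qed

lemma down_swap: "down_rep \<phi> k e x y = prod.swap (up_rep \<phi> k e (prod.swap x) (prod.swap y))"
  by (simp add: down_rep_def up_rep_def)

lemma rel_swap': "(x,y) \<in> arc_rel \<phi> k z0 z1 \<Longrightarrow> (prod.swap x, prod.swap y) \<in> arc_rel \<phi> k z1 z0"
  by (cases x, cases y) (simp add: rel_swap)

lemma down_wd:
  assumes e: "e = 1 \<or> e = -1" and rx: "(x,x') \<in> arc_rel \<phi> k z0 z1" and ry: "(y,y') \<in> arc_rel \<phi> k z0 z1"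
  shows "(down_rep \<phi> k e x y, down_rep \<phi> k e x' y') \<in> arc_rel \<phi> k z0 z1"
proof -
  have "(up_rep \<phi> k e (prod.swap x) (prod.swap y), up_rep \<phi> k e (prod.swap x') (prod.swap y')) \<in> arc_rel \<phi> k z1 z0"
    using up_wd[OF e rel_swap'[OF rx] rel_swap'[OF ry]] .
  from rel_swap'[OF this] show ?thesis unfolding down_swap by simp
qed

lemma cancel_up:
  assumes e: "e = 1 \<or> e = -1" and xa: "x \<in> arcs \<phi> k z0 z1" and ya: "y \<in> arcs \<phi> k z0 z1"
  shows "(up_rep \<phi> k (-e) (up_rep \<phi> k e x y) y, x) \<in> arc_rel \<phi> k z0 z1"
proof -
  obtain x0 x1 y0 y1 where xx: "x = (x0,x1)" "y = (y0,y1)" by (metis prod.exhaust)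
  note XA = arcsD[OF xa[unfolded xx(1)]] and YA = arcsD[OF ya[unfolded xx(2)]]
  let ?m = "meridian \<phi> k e (pathstart y0)"
  note M = mer_path[OF e YA(5)]
  note B = beta_props[OF e ya]
  have e': "-e = 1 \<or> -e = -1" using e by auto
  note B' = beta_props[OF e' ya]
  have bm: "beta (-e) y = reversepath y0 +++ (reversepath ?m +++ y0)"
    unfolding beta_def xx fst_conv mrev[OF e] ..
  have rb: "reversepath (beta e y) = (reversepath y0 +++ reversepath ?m) +++ y0"
    unfolding beta_def xx fst_conv using M YA
    by (simp add: reversepath_joinpaths)
  have h1: "homotopic_paths E (beta (-e) y) (reversepath (beta e y))"
    unfolding bm rb using M YA
    by (intro homotopic_paths_assoc) auto
  let ?b = "beta e y"
  have "homotopic_paths E ((x0 +++ ?b) +++ beta (-e) y) ((x0 +++ ?b) +++ reversepath ?b)"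
    by (rule homotopic_paths_join)
       (use XA B B' h1 in \<open>auto simp: homotopic_paths_refl path_image_join intro!: path_join_imp\<close>)
  also have "homotopic_paths E \<dots> (x0 +++ (?b +++ reversepath ?b))"
    by (rule homotopic_paths_sym, rule homotopic_paths_assoc) (use XA B in auto)
  also have "homotopic_paths E \<dots> (x0 +++ linepath z0 z0)"
    by (rule homotopic_paths_join)
       (use XA B homotopic_paths_rinv[of ?b E] in \<open>auto simp: homotopic_paths_refl\<close>)
  also have "homotopic_paths E \<dots> x0"
    using homotopic_paths_rid[of x0 E] XA by simp
  finally have hp: "homotopic_paths E ((x0 +++ ?b) +++ beta (-e) y) x0" .
  have "(((x0 +++ ?b) +++ beta (-e) y, x1), (x0,x1)) \<in> arc_rel \<phi> k z0 z1"
    by (rule left_hp[OF hp]) (use xa xx in simp)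
  then show ?thesis unfolding up_rep_beta xx by simp
qed

lemma cancel_down:
  assumes e: "e = 1 \<or> e = -1" and xa: "x \<in> arcs \<phi> k z0 z1" and ya: "y \<in> arcs \<phi> k z0 z1"
  shows "(down_rep \<phi> k (-e) (down_rep \<phi> k e x y) y, x) \<in> arc_rel \<phi> k z0 z1"
proof -
  have xa': "prod.swap x \<in> arcs \<phi> k z1 z0" "prod.swap y \<in> arcs \<phi> k z1 z0"
    using xa ya arcs_swap by (cases x, cases y, auto)+
  from rel_swap'[OF cancel_up[OF e xa'(1) xa'(2)]] show ?thesis
    unfolding down_swap by simp
qed

end



context biqL begin

lemma cls:
  assumes "X \<in> biq \<phi> k z0 z1" "x \<in> X"
  shows "x \<in> arcs \<phi> k z0 z1" "X = arc_rel \<phi> k z0 z1 `` {x}"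
proof -
  obtain a where a: "a \<in> arcs \<phi> k z0 z1" "X = arc_rel \<phi> k z0 z1 `` {a}"
    using assms(1) unfolding biq_def by (auto elim!: quotientE)
  then have ax: "(a,x) \<in> arc_rel \<phi> k z0 z1" using assms(2) by auto
  then show "x \<in> arcs \<phi> k z0 z1" using rel_arcs by blast
  show "X = arc_rel \<phi> k z0 z1 `` {x}" using a(2) equiv_class_eq[OF equivR ax] by simp
qed

lemma some_in:
  assumes "X \<in> biq \<phi> k z0 z1" shows "(SOME x. x \<in> X) \<in> X"
proof -
  obtain a where a: "a \<in> arcs \<phi> k z0 z1" "X = arc_rel \<phi> k z0 z1 `` {a}"
    using assms(1) unfolding biq_def by (auto elim!: quotientE)
  then have "a \<in> X" using equiv_class_self[OF equivR] by blast
  then show ?thesis by (rule someI)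
qed

lemma cls_mem:
  assumes "w \<in> arcs \<phi> k z0 z1"
  shows "arc_rel \<phi> k z0 z1 `` {w} \<in> biq \<phi> k z0 z1" "w \<in> arc_rel \<phi> k z0 z1 `` {w}"
  using assms quotientI equiv_class_self[OF equivR] unfolding biq_def by auto

lemma upc:
  assumes e: "e = 1 \<or> e = -1" and XY: "X \<in> biq \<phi> k z0 z1" "Y \<in> biq \<phi> k z0 z1" and xy: "x \<in> X" "y \<in> Y"
  shows "bq_up \<phi> k e z0 z1 X Y = arc_rel \<phi> k z0 z1 `` {up_rep \<phi> k e x y}"
    "bq_up \<phi> k e z0 z1 X Y \<in> biq \<phi> k z0 z1" "up_rep \<phi> k e x y \<in> bq_up \<phi> k e z0 z1 X Y"
proof -
  let ?x = "SOME x. x \<in> X" and ?y = "SOME y. y \<in> Y"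
  have "(x, ?x) \<in> arc_rel \<phi> k z0 z1" using cls(2)[OF XY(1) xy(1)] some_in[OF XY(1)] by auto
  moreover have "(y, ?y) \<in> arc_rel \<phi> k z0 z1" using cls(2)[OF XY(2) xy(2)] some_in[OF XY(2)] by auto
  ultimately have r: "(up_rep \<phi> k e x y, up_rep \<phi> k e ?x ?y) \<in> arc_rel \<phi> k z0 z1"
    using up_wd[OF e] by blast
  show eq: "bq_up \<phi> k e z0 z1 X Y = arc_rel \<phi> k z0 z1 `` {up_rep \<phi> k e x y}"
    unfolding bq_up_def using equiv_class_eq[OF equivR r] by simp
  have "up_rep \<phi> k e x y \<in> arcs \<phi> k z0 z1" using r rel_arcs by blast
  then show "bq_up \<phi> k e z0 z1 X Y \<in> biq \<phi> k z0 z1" "up_rep \<phi> k e x y \<in> bq_up \<phi> k e z0 z1 X Y"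
    unfolding eq using cls_mem by auto
qed

lemma downc:
  assumes e: "e = 1 \<or> e = -1" and XY: "X \<in> biq \<phi> k z0 z1" "Y \<in> biq \<phi> k z0 z1" and xy: "x \<in> X" "y \<in> Y"
  shows "bq_down \<phi> k e z0 z1 X Y = arc_rel \<phi> k z0 z1 `` {down_rep \<phi> k e x y}"
    "bq_down \<phi> k e z0 z1 X Y \<in> biq \<phi> k z0 z1" "down_rep \<phi> k e x y \<in> bq_down \<phi> k e z0 z1 X Y"
proof -
  let ?x = "SOME x. x \<in> X" and ?y = "SOME y. y \<in> Y"
  have "(x, ?x) \<in> arc_rel \<phi> k z0 z1" using cls(2)[OF XY(1) xy(1)] some_in[OF XY(1)] by auto
  moreover have "(y, ?y) \<in> arc_rel \<phi> k z0 z1" using cls(2)[OF XY(2) xy(2)] some_in[OF XY(2)] by auto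
  ultimately have r: "(down_rep \<phi> k e x y, down_rep \<phi> k e ?x ?y) \<in> arc_rel \<phi> k z0 z1"
    using down_wd[OF e] by blast
  show eq: "bq_down \<phi> k e z0 z1 X Y = arc_rel \<phi> k z0 z1 `` {down_rep \<phi> k e x y}"
    unfolding bq_down_def using equiv_class_eq[OF equivR r] by simp
  have "down_rep \<phi> k e x y \<in> arcs \<phi> k z0 z1" using r rel_arcs by blast
  then show "bq_down \<phi> k e z0 z1 X Y \<in> biq \<phi> k z0 z1" "down_rep \<phi> k e x y \<in> bq_down \<phi> k e z0 z1 X Y"
    unfolding eq using cls_mem by auto
qed

lemma comm:
  assumes e1: "e1 = 1 \<or> e1 = -1" and e2: "e2 = 1 \<or> e2 = -1"
    and abc: "a \<in> biq \<phi> k z0 z1" "b \<in> biq \<phi> k z0 z1" "c \<in> biq \<phi> k z0 z1"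
  shows "bq_down \<phi> k e2 z0 z1 (bq_up \<phi> k e1 z0 z1 a b) c = bq_up \<phi> k e1 z0 z1 (bq_down \<phi> k e2 z0 z1 a c) b"
proof -
  note sa = some_in[OF abc(1)] and sb = some_in[OF abc(2)] and sc = some_in[OF abc(3)]
  note U = upc[OF e1 abc(1,2) sa sb] and D = downc[OF e2 abc(1,3) sa sc]
  note U2 = upc[OF e1 D(2) abc(2) D(3) sb] and D2 = downc[OF e2 U(2) abc(3) U(3) sc]
  show ?thesis unfolding U2(1) D2(1) by (simp add: up_rep_def down_rep_def)
qed

lemma up_down:
  assumes e1: "e1 = 1 \<or> e1 = -1" and e2: "e2 = 1 \<or> e2 = -1"
    and abc: "a \<in> biq \<phi> k z0 z1" "b \<in> biq \<phi> k z0 z1" "c \<in> biq \<phi> k z0 z1"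
  shows "bq_up \<phi> k e1 z0 z1 a (bq_down \<phi> k e2 z0 z1 b c) = bq_up \<phi> k e1 z0 z1 a b"
proof -
  note sa = some_in[OF abc(1)] and sb = some_in[OF abc(2)] and sc = some_in[OF abc(3)]
  note D = downc[OF e2 abc(2,3) sb sc]
  note U = upc[OF e1 abc(1,2) sa sb] and U2 = upc[OF e1 abc(1) D(2) sa D(3)]
  show ?thesis unfolding U(1) U2(1) by (simp add: up_rep_def down_rep_def)
qed

lemma down_up:
  assumes e1: "e1 = 1 \<or> e1 = -1" and e2: "e2 = 1 \<or> e2 = -1"
    and abc: "a \<in> biq \<phi> k z0 z1" "b \<in> biq \<phi> k z0 z1" "c \<in> biq \<phi> k z0 z1"
  shows "bq_down \<phi> k e1 z0 z1 a (bq_up \<phi> k e2 z0 z1 b c) = bq_down \<phi> k e1 z0 z1 a b"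
proof -
  note sa = some_in[OF abc(1)] and sb = some_in[OF abc(2)] and sc = some_in[OF abc(3)]
  note D = upc[OF e2 abc(2,3) sb sc]
  note U = downc[OF e1 abc(1,2) sa sb] and U2 = downc[OF e1 abc(1) D(2) sa D(3)]
  show ?thesis unfolding U(1) U2(1) by (simp add: up_rep_def down_rep_def)
qed

lemma canc_up:
  assumes e: "e = 1 \<or> e = -1" and ab: "a \<in> biq \<phi> k z0 z1" "b \<in> biq \<phi> k z0 z1"
  shows "bq_up \<phi> k (-e) z0 z1 (bq_up \<phi> k e z0 z1 a b) b = a"
proof -
  have e': "-e = 1 \<or> -e = -1" using e by auto
  note sa = some_in[OF ab(1)] and sb = some_in[OF ab(2)]
  note U = upc[OF e ab sa sb]
  note U2 = upc[OF e' U(2) ab(2) U(3) sb]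
  have r: "(up_rep \<phi> k (-e) (up_rep \<phi> k e (SOME x. x \<in> a) (SOME x. x \<in> b)) (SOME x. x \<in> b), SOME x. x \<in> a)
     \<in> arc_rel \<phi> k z0 z1"
    using cancel_up[OF e cls(1)[OF ab(1) sa] cls(1)[OF ab(2) sb]] .
  show ?thesis unfolding U2(1) equiv_class_eq[OF equivR r] using cls(2)[OF ab(1) sa] by simp
qed

lemma canc_down:
  assumes e: "e = 1 \<or> e = -1" and ab: "a \<in> biq \<phi> k z0 z1" "b \<in> biq \<phi> k z0 z1"
  shows "bq_down \<phi> k (-e) z0 z1 (bq_down \<phi> k e z0 z1 a b) b = a"
proof -
  have e': "-e = 1 \<or> -e = -1" using e by auto
  note sa = some_in[OF ab(1)] and sb = some_in[OF ab(2)]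
  note U = downc[OF e ab sa sb]
  note U2 = downc[OF e' U(2) ab(2) U(3) sb]
  have r: "(down_rep \<phi> k (-e) (down_rep \<phi> k e (SOME x. x \<in> a) (SOME x. x \<in> b)) (SOME x. x \<in> b), SOME x. x \<in> a)
     \<in> arc_rel \<phi> k z0 z1"
    using cancel_down[OF e cls(1)[OF ab(1) sa] cls(1)[OF ab(2) sb]] .
  show ?thesis unfolding U2(1) equiv_class_eq[OF equivR r] using cls(2)[OF ab(1) sa] by simp
qed

lemma Sinv:
  assumes e: "e = 1 \<or> e = -1" and ab: "a \<in> biq \<phi> k z0 z1" "b \<in> biq \<phi> k z0 z1"
  shows "bq_Sinv \<phi> k e z0 z1 (a,b) = (bq_up \<phi> k (-e) z0 z1 b a, bq_down \<phi> k (-e) z0 z1 a b)"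
  unfolding bq_Sinv_def
proof (rule the_equality)
  have e': "-e = 1 \<or> -e = -1" using e by auto
  note sa = some_in[OF ab(1)] and sb = some_in[OF ab(2)]
  note U = upc[OF e' ab(2,1) sb sa] and D = downc[OF e' ab sa sb]
  show "(bq_up \<phi> k (-e) z0 z1 b a, bq_down \<phi> k (-e) z0 z1 a b) \<in> biq \<phi> k z0 z1 \<times> biq \<phi> k z0 z1 \<and>
    bq_S \<phi> k e z0 z1 (bq_up \<phi> k (-e) z0 z1 b a, bq_down \<phi> k (-e) z0 z1 a b) = (a, b)"
  proof (intro conjI)
    show "(bq_up \<phi> k (-e) z0 z1 b a, bq_down \<phi> k (-e) z0 z1 a b) \<in> biq \<phi> k z0 z1 \<times> biq \<phi> k z0 z1"
      using U(2) D(2) by auto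
    have "bq_down \<phi> k e z0 z1 (bq_down \<phi> k (-e) z0 z1 a b) (bq_up \<phi> k (-e) z0 z1 b a) = a"
      by (metis canc_down[OF e' ab] down_up[OF e e' D(2) ab(2) ab(1)] minus_minus)
    moreover have "bq_up \<phi> k e z0 z1 (bq_up \<phi> k (-e) z0 z1 b a) (bq_down \<phi> k (-e) z0 z1 a b) = b"
      by (metis up_down[OF e e' U(2) ab(1) ab(2)] canc_up[OF e' ab(2,1)] minus_minus)
    ultimately show "bq_S \<phi> k e z0 z1 (bq_up \<phi> k (-e) z0 z1 b a, bq_down \<phi> k (-e) z0 z1 a b) = (a, b)"
      unfolding bq_S_def by simp
  qed
  fix p assume p: "p \<in> biq \<phi> k z0 z1 \<times> biq \<phi> k z0 z1 \<and> bq_S \<phi> k e z0 z1 p = (a, b)"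
  obtain P1 P2 where pp: "p = (P1,P2)" by force
  have P: "P1 \<in> biq \<phi> k z0 z1" "P2 \<in> biq \<phi> k z0 z1" using p pp by auto
  have ae: "a = bq_down \<phi> k e z0 z1 P2 P1" and be: "b = bq_up \<phi> k e z0 z1 P1 P2"
    using p pp unfolding bq_S_def by auto
  have "bq_up \<phi> k (-e) z0 z1 b a = P1"
    unfolding ae be using up_down[OF e' e upc(2)[OF e P some_in[OF P(1)] some_in[OF P(2)]] P(2) P(1)]
      canc_up[OF e P] by simp
  moreover have "bq_down \<phi> k (-e) z0 z1 a b = P2"
    unfolding ae be using down_up[OF e' e downc(2)[OF e P(2) P(1) some_in[OF P(2)] some_in[OF P(1)]] P(1) P(2)]
      canc_down[OF e P(2) P(1)] by simp
  ultimately show "p = (bq_up \<phi> k (-e) z0 z1 b a, bq_down \<phi> k (-e) z0 z1 a b)" using pp by simp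
qed

end



lemma exp_2pi_e: "e = 1 \<or> e = -1 \<Longrightarrow> exp (complex_of_real (2*pi*e) * \<i>) = 1"
proof (elim disjE)
  assume "e = 1" then show ?thesis by (simp add: exp_two_pi_i')
next
  assume "e = -1"
  then have "complex_of_real (2*pi*e) * \<i> = - (2 * complex_of_real pi * \<i>)" by simp
  then show ?thesis unfolding \<open>complex_of_real (2*pi*e) * \<i> = - (2 * complex_of_real pi * \<i>)\<close>
    by (simp only: exp_minus exp_two_pi_i inverse_1)
qed

lemma norm_exp_ii: "norm (exp (complex_of_real x * \<i>)) = 1"
  by (simp add: norm_exp_i_times[of x, simplified mult.commute] mult.commute)

lemma open_nat_singleton: "open {i::nat}"
  by (rule open_discrete)

lemma tor_dom_eq: "tor_dom k = {..<k} \<times> (sphere 0 1 \<times> cball 0 1)"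
  by (auto simp: tor_dom_def)

lemma tor_bdry_eq: "tor_bdry k = {..<k} \<times> (sphere 0 1 \<times> sphere 0 1)"
  by (auto simp: tor_bdry_def)

lemma compact_tor: "compact (tor_dom k)" "compact (tor_bdry k)"
  unfolding tor_dom_eq tor_bdry_eq
  by (auto intro!: compact_Times[OF finite_imp_compact compact_Times])

lemma tor_sub: "tor_bdry k \<subseteq> tor_dom k"
  by (auto simp: tor_bdry_def tor_dom_def)




locale tube =
  fixes \<phi> :: "nat \<times> complex \<times> complex \<Rightarrow> real^4" and k :: nat
  assumes tc: "continuous_on (tor_dom k) \<phi>" and ti: "inj_on \<phi> (tor_dom k)"
    and tS3: "\<phi> ` tor_dom k \<subseteq> S3"
begin

definition "psi = inv_into (tor_bdry k) \<phi>"

lemma tib: "inj_on \<phi> (tor_bdry k)" using ti tor_sub inj_on_subset by blast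

lemma psi_cont: "continuous_on (bdry \<phi> k) psi"
  unfolding bdry_def psi_def
  by (rule continuous_on_inv[OF continuous_on_subset[OF tc tor_sub] compact_tor(2)])
     (simp add: inv_into_f_f[OF tib])

lemma psi_in: "p \<in> bdry \<phi> k \<Longrightarrow> psi p \<in> tor_bdry k"
  unfolding bdry_def psi_def by (rule inv_into_into)

lemma phi_psi: "p \<in> bdry \<phi> k \<Longrightarrow> \<phi> (psi p) = p"
  unfolding bdry_def psi_def by (rule f_inv_into_f)

definition "G e z = (fst (psi (fst z)), fst (snd (psi (fst z))),
    snd (snd (psi (fst z))) * exp (complex_of_real (2*pi*e * snd z) * \<i>))"

lemma mer_eq: "meridian \<phi> k e p t = \<phi> (G e (p,t))"
  unfolding meridian_def G_def psi_def by (simp add: Let_def case_prod_beta)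

lemma G_in: "p \<in> bdry \<phi> k \<Longrightarrow> G e (p,t) \<in> tor_bdry k"
  using psi_in[of p] by (auto simp: G_def tor_bdry_def norm_mult norm_exp_ii)

lemma G_cont: "continuous_on (bdry \<phi> k \<times> {0..1}) (G e)"
proof -
  have c: "continuous_on (bdry \<phi> k \<times> {0..1}) (\<lambda>z. psi (fst z))"
    by (rule continuous_on_compose2[OF psi_cont continuous_on_fst]) auto
  show ?thesis unfolding G_def
    by (intro continuous_intros c)
qed

lemma mc: "continuous_on (bdry \<phi> k \<times> {0..1}) (\<lambda>z. meridian \<phi> k e (fst z) (snd z))"
  unfolding mer_eq prod.collapse
  by (rule continuous_on_compose2[OF tc G_cont]) (use G_in tor_sub in force)

lemma m0: "p \<in> bdry \<phi> k \<Longrightarrow> meridian \<phi> k e p 0 = p"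
  unfolding mer_eq G_def using phi_psi[of p] by simp

lemma m1: "e = 1 \<or> e = -1 \<Longrightarrow> p \<in> bdry \<phi> k \<Longrightarrow> meridian \<phi> k e p 1 = p"
  unfolding mer_eq G_def using phi_psi[of p] exp_2pi_e[of e] by simp

lemma mim: "p \<in> bdry \<phi> k \<Longrightarrow> meridian \<phi> k e p t \<in> bdry \<phi> k"
  unfolding mer_eq bdry_def using G_in[of p] by (auto simp: bdry_def)

lemma mrev: "e = 1 \<or> e = -1 \<Longrightarrow> meridian \<phi> k (-e) p = reversepath (meridian \<phi> k e p)"
proof (rule ext)
  fix t assume e: "e = 1 \<or> e = -1"
  have "complex_of_real (2*pi*e*(1-t)) * \<i> = complex_of_real (2*pi*e) * \<i> + complex_of_real (2*pi*(-e)*t) * \<i>"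
    by (simp add: algebra_simps)
  then have "exp (complex_of_real (2*pi*e*(1-t)) * \<i>) = exp (complex_of_real (2*pi*(-e)*t) * \<i>)"
    by (simp only: exp_add exp_2pi_e[OF e] mult_1)
  then show "meridian \<phi> k (-e) p t = reversepath (meridian \<phi> k e p) t"
    unfolding reversepath_def mer_eq G_def by simp
qed

end



lemma circ_inj:
  fixes a b :: complex
  assumes "norm a = 1" "norm b = 1" "Re a > 0" "Re b > 0" "Im a = Im b"
  shows "a = b"
proof -
  have "(Re a)^2 + (Im a)^2 = 1" "(Re b)^2 + (Im b)^2 = 1"
    using assms(1,2) by (simp_all add: cmod_def)
  then have "(Re a)^2 = (Re b)^2" using assms(5) by simp
  then have "Re a = Re b" using assms(3,4) by (simp add: power2_eq_iff_nonneg)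
  then show ?thesis using assms(5) complex_eqI by blast
qed

lemma unit_cancel:
  fixes u u' u0 :: complex
  assumes "norm u0 = 1" "u * cnj u0 = u' * cnj u0" shows "u = u'"
proof -
  have "u0 \<noteq> 0" using assms(1) by auto
  then have "cnj u0 \<noteq> 0" by simp
  then show ?thesis using assms(2) by simp
qed

context tube begin

definition "psi' = inv_into (tor_dom k) \<phi>"

lemma psi'_cont: "continuous_on (nbhd \<phi> k) psi'"
  unfolding nbhd_def psi'_def
  by (rule continuous_on_inv[OF tc compact_tor(1)]) (simp add: inv_into_f_f[OF ti])

lemma bdry_ext: "bdry \<phi> k \<subseteq> ext \<phi> k"
proof
  fix p assume pb: "p \<in> bdry \<phi> k"
  then obtain i u0 w0 where p: "p = \<phi> (i,u0,w0)" and ik: "i < k" and u0: "norm u0 = 1" and w0: "norm w0 = 1"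
    unfolding bdry_def tor_bdry_def by auto
  have pd: "(i,u0,w0) \<in> tor_dom k" using ik u0 w0 by (simp add: tor_dom_def)
  have pn: "p \<in> nbhd \<phi> k" using pd p by (auto simp: nbhd_def)
  have pS: "p \<in> S3" using pn tS3 by (auto simp: nbhd_def)
  show "p \<in> ext \<phi> k"
  proof (rule ccontr)
    assume "p \<notin> ext \<phi> k"
    then obtain r where r: "r > 0" and rr: "\<forall>y\<in>S3 - nbhd \<phi> k. \<not> dist y p < r"
      unfolding ext_def closure_approachable by auto
    define V where "V = S3 \<inter> ball p r"
    have Vn: "V \<subseteq> nbhd \<phi> k" using rr by (auto simp: V_def dist_commute)
    define Oo where "Oo = {i} \<times> ({u. 0 < Re (u * cnj u0)} \<times> (UNIV :: complex set))"
    have oO: "open Oo" unfolding Oo_def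
      by (intro open_Times open_nat_singleton open_Collect_less continuous_intros) auto
    define S' where "S' = {x \<in> V. psi' x \<in> Oo}"
    have c': "continuous_on V psi'" using continuous_on_subset[OF psi'_cont Vn] .
    have o1: "openin (top_of_set V) S'"
    proof -
      have "S' = V \<inter> psi' -` Oo" by (auto simp: S'_def)
      then show ?thesis using continuous_openin_preimage_gen[OF c' oO] by simp
    qed
    have o2: "openin (top_of_set (sphere 0 1)) V" unfolding V_def S3_def
      by (rule openin_open_Int) simp
    have oS': "openin (top_of_set (sphere 0 1)) S'" using openin_trans[OF o1 o2] .
    define C where "C = (\<lambda>(j::nat,u::complex,w::complex). (Im (u * cnj u0), Im (w * cnj w0), Re (w * cnj w0)))"
    define f where "f = C \<circ> psi'"
    have fc: "continuous_on S' f"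
    proof -
      have "continuous_on S' psi'" using continuous_on_subset[OF c'] by (auto simp: S'_def)
      moreover have "continuous_on UNIV C" unfolding C_def case_prod_beta by (intro continuous_intros)
      ultimately show ?thesis unfolding f_def
        by (rule continuous_on_compose[OF _ continuous_on_subset]) simp
    qed
    have psiin: "x \<in> S' \<Longrightarrow> psi' x \<in> tor_dom k \<and> \<phi> (psi' x) = x \<and> psi' x \<in> Oo" for x
      using Vn unfolding S'_def psi'_def nbhd_def by (auto intro: inv_into_into f_inv_into_f)
    have fi: "inj_on f S'"
    proof
      fix x y assume x: "x \<in> S'" and y: "y \<in> S'" and fxy: "f x = f y"
      obtain j u w where px: "psi' x = (j,u,w)" by (metis prod.exhaust)
      obtain j' u' w' where py: "psi' y = (j',u',w')" by (metis prod.exhaust)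
      note X = psiin[OF x] and Y = psiin[OF y]
      have jj: "j = i" "j' = i" and pos: "0 < Re (u * cnj u0)" "0 < Re (u' * cnj u0)"
        using X Y px py by (auto simp: Oo_def)
      have nu: "norm u = 1" "norm u' = 1" using X Y px py by (auto simp: tor_dom_def)
      have eqs: "Im (u * cnj u0) = Im (u' * cnj u0)" "Im (w * cnj w0) = Im (w' * cnj w0)"
          "Re (w * cnj w0) = Re (w' * cnj w0)" using fxy px py by (auto simp: f_def C_def)
      have "u * cnj u0 = u' * cnj u0"
        by (rule circ_inj) (use nu u0 pos eqs in \<open>auto simp: norm_mult\<close>)
      then have uu: "u = u'" using unit_cancel[OF u0] by blast
      have "w * cnj w0 = w' * cnj w0" using eqs complex_eqI by blast
      then have ww: "w = w'" using unit_cancel[OF w0] by blast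
      have "psi' x = psi' y" using px py jj uu ww by simp
      then have "\<phi> (psi' x) = \<phi> (psi' y)" by simp
      then show "x = y" using X Y by simp
    qed
    have "openin (top_of_set (UNIV :: (real\<times>real\<times>real) set)) (f ` S')"
      by (rule invariance_of_domain_sphere_affine_set[OF fc fi _ _ _ _ oS']) auto
    then have of: "open (f ` S')" by simp
    have pS': "p \<in> S'"
    proof -
      have "psi' p = (i,u0,w0)" unfolding psi'_def p using inv_into_f_f[OF ti pd] .
      moreover have "0 < Re (u0 * cnj u0)" using u0 by (simp flip: complex_norm_square)
      ultimately show ?thesis using pS r by (auto simp: S'_def V_def Oo_def)
    qed
    have fp: "f p = (0,0,1)"
    proof -
      have "psi' p = (i,u0,w0)" unfolding psi'_def p using inv_into_f_f[OF ti pd] .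
      moreover have ew: "w0 * cnj w0 = 1" and eu: "u0 * cnj u0 = 1" using u0 w0 by (simp_all flip: complex_norm_square)
      ultimately show ?thesis unfolding f_def comp_def C_def by (simp only: prod.case ew eu) simp
    qed
    have "f p \<in> f ` S'" using pS' by blast
    then obtain d where d: "d > 0" "ball (0,0,1) d \<subseteq> f ` S'"
      using of fp unfolding open_contains_ball by auto
    have "(0,0,1 + d/2) \<in> ball ((0::real),(0::real),(1::real)) d"
    proof -
      have a: "dist (1::real) (1 + d/2) = d/2" using d by (simp add: dist_real_def)
      have b: "dist ((0::real),(1::real)) (0, 1 + d/2) = d/2"
        unfolding dist_Pair_Pair a using d by simp
      have c: "dist ((0::real),(0::real),(1::real)) (0, 0, 1 + d/2) = d/2"
        unfolding dist_Pair_Pair[of "0::real" "(0::real,1::real)"] b using d by simp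
      show ?thesis using c d by simp
    qed
    then have "(0,0,1 + d/2) \<in> f ` S'" using d(2) by (rule rev_subsetD)
    then obtain x where x: "x \<in> S'" and fx: "f x = (0,0,1 + d/2)" by (auto elim!: imageE)
    obtain j u w where px: "psi' x = (j,u,w)" by (metis prod.exhaust)
    have nw: "norm w \<le> 1" using psiin[OF x] px by (auto simp: tor_dom_def)
    have "Re (w * cnj w0) \<le> norm (w * cnj w0)" by (rule complex_Re_le_cmod)
    also have "\<dots> \<le> 1" using nw w0 by (simp add: norm_mult)
    finally have "Re (w * cnj w0) \<le> 1" .
    moreover have "Re (w * cnj w0) = 1 + d/2" using fx px by (simp add: f_def C_def)
    ultimately show False using d by simp
  qed
qed

end



context biqL begin

lemma up_mem: "e = 1 \<or> e = -1 \<Longrightarrow> X \<in> biq \<phi> k z0 z1 \<Longrightarrow> Y \<in> biq \<phi> k z0 z1 \<Longrightarrow> bq_up \<phi> k e z0 z1 X Y \<in> biq \<phi> k z0 z1"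
  using upc(2) some_in by blast

lemma down_mem: "e = 1 \<or> e = -1 \<Longrightarrow> X \<in> biq \<phi> k z0 z1 \<Longrightarrow> Y \<in> biq \<phi> k z0 z1 \<Longrightarrow> bq_down \<phi> k e z0 z1 X Y \<in> biq \<phi> k z0 z1"
  using downc(2) some_in by blast

lemma Up_eq: "e = 1 \<or> e = -1 \<Longrightarrow> X \<in> biq \<phi> k z0 z1 \<Longrightarrow> Y \<in> biq \<phi> k z0 z1 \<Longrightarrow>
   bq_Up \<phi> k e z0 z1 X Y = bq_up \<phi> k (-e) z0 z1 X Y"
  unfolding bq_Up_def using Sinv by simp

lemma Down_eq: "e = 1 \<or> e = -1 \<Longrightarrow> X \<in> biq \<phi> k z0 z1 \<Longrightarrow> Y \<in> biq \<phi> k z0 z1 \<Longrightarrow>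
   bq_Down \<phi> k e z0 z1 X Y = bq_down \<phi> k (-e) z0 z1 X Y"
  unfolding bq_Down_def using Sinv by simp

lemma main_loc:
  assumes e: "\<epsilon> = 1 \<or> \<epsilon> = -1"
    and a: "a \<in> biq \<phi> k z0 z1" and b: "b \<in> biq \<phi> k z0 z1" and c: "c \<in> biq \<phi> k z0 z1"
  shows
   "bq_down \<phi> k \<epsilon> z0 z1 (bq_up \<phi> k \<epsilon> z0 z1 a b) c = bq_up \<phi> k \<epsilon> z0 z1 (bq_down \<phi> k \<epsilon> z0 z1 a c) b \<and>
    bq_down \<phi> k \<epsilon> z0 z1 (bq_Up \<phi> k \<epsilon> z0 z1 a b) c = bq_Up \<phi> k \<epsilon> z0 z1 (bq_down \<phi> k \<epsilon> z0 z1 a c) b \<and>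
    bq_Down \<phi> k \<epsilon> z0 z1 (bq_up \<phi> k \<epsilon> z0 z1 a b) c = bq_up \<phi> k \<epsilon> z0 z1 (bq_Down \<phi> k \<epsilon> z0 z1 a c) b \<and>
    bq_Down \<phi> k \<epsilon> z0 z1 (bq_Up \<phi> k \<epsilon> z0 z1 a b) c = bq_Up \<phi> k \<epsilon> z0 z1 (bq_Down \<phi> k \<epsilon> z0 z1 a c) b \<and>
    bq_Up \<phi> k \<epsilon> z0 z1 (bq_up \<phi> k \<epsilon> z0 z1 a b) b = a \<and>
    bq_up \<phi> k \<epsilon> z0 z1 (bq_Up \<phi> k \<epsilon> z0 z1 a b) b = a \<and>
    bq_Down \<phi> k \<epsilon> z0 z1 (bq_down \<phi> k \<epsilon> z0 z1 a b) b = a \<and>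
    bq_down \<phi> k \<epsilon> z0 z1 (bq_Down \<phi> k \<epsilon> z0 z1 a b) b = a \<and>
    bq_up \<phi> k \<epsilon> z0 z1 a (bq_down \<phi> k \<epsilon> z0 z1 b c) = bq_up \<phi> k \<epsilon> z0 z1 a b \<and>
    bq_up \<phi> k \<epsilon> z0 z1 a (bq_Down \<phi> k \<epsilon> z0 z1 b c) = bq_up \<phi> k \<epsilon> z0 z1 a b \<and>
    bq_Up \<phi> k \<epsilon> z0 z1 a (bq_down \<phi> k \<epsilon> z0 z1 b c) = bq_Up \<phi> k \<epsilon> z0 z1 a b \<and>
    bq_Up \<phi> k \<epsilon> z0 z1 a (bq_Down \<phi> k \<epsilon> z0 z1 b c) = bq_Up \<phi> k \<epsilon> z0 z1 a b \<and>
    bq_down \<phi> k \<epsilon> z0 z1 a (bq_up \<phi> k \<epsilon> z0 z1 b c) = bq_down \<phi> k \<epsilon> z0 z1 a b \<and>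
    bq_down \<phi> k \<epsilon> z0 z1 a (bq_Up \<phi> k \<epsilon> z0 z1 b c) = bq_down \<phi> k \<epsilon> z0 z1 a b \<and>
    bq_Down \<phi> k \<epsilon> z0 z1 a (bq_up \<phi> k \<epsilon> z0 z1 b c) = bq_Down \<phi> k \<epsilon> z0 z1 a b \<and>
    bq_Down \<phi> k \<epsilon> z0 z1 a (bq_Up \<phi> k \<epsilon> z0 z1 b c) = bq_Down \<phi> k \<epsilon> z0 z1 a b"
proof -
  have e': "-\<epsilon> = 1 \<or> -\<epsilon> = -1" using e by auto
  note M = up_mem[OF e] up_mem[OF e'] down_mem[OF e] down_mem[OF e']
  note UD = Up_eq[OF e] Down_eq[OF e]
  have cu1: "bq_up \<phi> k \<epsilon> z0 z1 (bq_up \<phi> k (-\<epsilon>) z0 z1 a b) b = a"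
    using canc_up[OF e' a b] by simp
  have cd1: "bq_down \<phi> k \<epsilon> z0 z1 (bq_down \<phi> k (-\<epsilon>) z0 z1 a b) b = a"
    using canc_down[OF e' a b] by simp
  show ?thesis
    by (simp add: UD M a b c e e' canc_up[OF e a b] canc_down[OF e a b] cu1 cd1
        comm[OF e e a b c] comm[OF e e' a b c] comm[OF e' e a b c] comm[OF e' e' a b c]
        up_down[OF e e a b c] up_down[OF e e' a b c] up_down[OF e' e a b c] up_down[OF e' e' a b c]
        down_up[OF e e a b c] down_up[OF e e' a b c] down_up[OF e' e a b c] down_up[OF e' e' a b c])
qed

end


lemma (in tube) biqL_ok: "biqL \<phi> k"
  by unfold_locales (auto simp: bdry_ext mc m0 m1 mim mrev)

theorem mainTheorem7:
  fixes \<phi> :: "nat \<times> complex \<times> complex \<Rightarrow> real^4" and k :: nat and \<epsilon> :: real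
    and h :: "real^3 \<Rightarrow> real^4" and v :: "real^3" and z0 z1 :: "real^4"
    and a b c :: "((real \<Rightarrow> real^4) \<times> (real \<Rightarrow> real^4)) set"
  assumes tube_cont: "continuous_on (tor_dom k) \<phi>"
    and tube_inj: "inj_on \<phi> (tor_dom k)"
    and tube_S3: "\<phi> ` tor_dom k \<subseteq> S3"
    and orient: "\<epsilon> = 1 \<or> \<epsilon> = -1"
    and ball_cont: "continuous_on (cball 0 1) h"
    and ball_inj: "inj_on h (cball 0 1)"
    and ball_S3: "h ` cball 0 1 \<subseteq> S3"
    and nbhd_in_ball: "nbhd \<phi> k \<subseteq> h ` cball 0 1"
    and v: "norm v = 1" and z0: "z0 = h v" and z1: "z1 = h (- v)"
    and a: "a \<in> biq \<phi> k z0 z1" and b: "b \<in> biq \<phi> k z0 z1" and c: "c \<in> biq \<phi> k z0 z1"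
  shows
   "bq_down \<phi> k \<epsilon> z0 z1 (bq_up \<phi> k \<epsilon> z0 z1 a b) c = bq_up \<phi> k \<epsilon> z0 z1 (bq_down \<phi> k \<epsilon> z0 z1 a c) b \<and>
    bq_down \<phi> k \<epsilon> z0 z1 (bq_Up \<phi> k \<epsilon> z0 z1 a b) c = bq_Up \<phi> k \<epsilon> z0 z1 (bq_down \<phi> k \<epsilon> z0 z1 a c) b \<and>
    bq_Down \<phi> k \<epsilon> z0 z1 (bq_up \<phi> k \<epsilon> z0 z1 a b) c = bq_up \<phi> k \<epsilon> z0 z1 (bq_Down \<phi> k \<epsilon> z0 z1 a c) b \<and>
    bq_Down \<phi> k \<epsilon> z0 z1 (bq_Up \<phi> k \<epsilon> z0 z1 a b) c = bq_Up \<phi> k \<epsilon> z0 z1 (bq_Down \<phi> k \<epsilon> z0 z1 a c) b \<and>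
    bq_Up \<phi> k \<epsilon> z0 z1 (bq_up \<phi> k \<epsilon> z0 z1 a b) b = a \<and>
    bq_up \<phi> k \<epsilon> z0 z1 (bq_Up \<phi> k \<epsilon> z0 z1 a b) b = a \<and>
    bq_Down \<phi> k \<epsilon> z0 z1 (bq_down \<phi> k \<epsilon> z0 z1 a b) b = a \<and>
    bq_down \<phi> k \<epsilon> z0 z1 (bq_Down \<phi> k \<epsilon> z0 z1 a b) b = a \<and>
    bq_up \<phi> k \<epsilon> z0 z1 a (bq_down \<phi> k \<epsilon> z0 z1 b c) = bq_up \<phi> k \<epsilon> z0 z1 a b \<and>
    bq_up \<phi> k \<epsilon> z0 z1 a (bq_Down \<phi> k \<epsilon> z0 z1 b c) = bq_up \<phi> k \<epsilon> z0 z1 a b \<and>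
    bq_Up \<phi> k \<epsilon> z0 z1 a (bq_down \<phi> k \<epsilon> z0 z1 b c) = bq_Up \<phi> k \<epsilon> z0 z1 a b \<and>
    bq_Up \<phi> k \<epsilon> z0 z1 a (bq_Down \<phi> k \<epsilon> z0 z1 b c) = bq_Up \<phi> k \<epsilon> z0 z1 a b \<and>
    bq_down \<phi> k \<epsilon> z0 z1 a (bq_up \<phi> k \<epsilon> z0 z1 b c) = bq_down \<phi> k \<epsilon> z0 z1 a b \<and>
    bq_down \<phi> k \<epsilon> z0 z1 a (bq_Up \<phi> k \<epsilon> z0 z1 b c) = bq_down \<phi> k \<epsilon> z0 z1 a b \<and>
    bq_Down \<phi> k \<epsilon> z0 z1 a (bq_up \<phi> k \<epsilon> z0 z1 b c) = bq_Down \<phi> k \<epsilon> z0 z1 a b \<and>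
    bq_Down \<phi> k \<epsilon> z0 z1 a (bq_Up \<phi> k \<epsilon> z0 z1 b c) = bq_Down \<phi> k \<epsilon> z0 z1 a b"
  proof -
  have "tube \<phi> k" using tube_cont tube_inj tube_S3 by unfold_locales
  then have "biqL \<phi> k" by (rule tube.biqL_ok)
  then show ?thesis using biqL.main_loc[OF _ orient a b c] by blast
qed

end
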